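(* For every integer $r\ge2$, \[K_{A_r}(2\alpha_1+2\alpha_2+\cdots+2\alpha_r)=\frac{(5-\sqrt5)^r+(5+\sqrt5)^r}{5\cdot 2^r}.\]
   Context: $\varepsilon_1,\dots,\varepsilon_{r+1}$ is the standard basis of $\mathbb{R}^{r+1}$, $\alpha_i=\varepsilon_i-\varepsilon_{i+1}$, so $2\alpha_1+\cdots+2\alpha_r=2\varepsilon_1-2\varepsilon_{r+1}$. $\Phi^+_{A_r}=\{\varepsilon_i-\varepsilon_j:1\le i<j\le r+1\}$ and $K_{A_r}(\mu)$ is the number of finite multisets of elements of $\Phi^+_{A_r}$ summing to $\mu$. *)

theory Defs
  imports "HOL-Analysis.Analysis" "HOL-Library.Multiset"
begin

text \<open>Vectors of \<real>^(r+1) with integer coordinates are modelled as functions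
  nat \<Rightarrow> int, coordinates indexed by 1..r+1 (all other coordinates are 0).\<close>

definition eps :: "nat \<Rightarrow> nat \<Rightarrow> int" where
  "eps i = (\<lambda>k. if k = i then 1 else 0)"

definition posroots_A :: "nat \<Rightarrow> (nat \<Rightarrow> int) set" where
  "posroots_A r = {(\<lambda>k. eps i k - eps j k) | i j. 1 \<le> i \<and> i < j \<and> j \<le> r + 1}"

definition simple_root :: "nat \<Rightarrow> nat \<Rightarrow> int" where
  "simple_root i = (\<lambda>k. eps i k - eps (i + 1) k)"

definition msum_vec :: "(nat \<Rightarrow> int) multiset \<Rightarrow> nat \<Rightarrow> int" where
  "msum_vec M = (\<lambda>k. sum_mset (image_mset (\<lambda>v. v k) M))"

definition kostant_A :: "nat \<Rightarrow> (nat \<Rightarrow> int) \<Rightarrow> nat" where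
  "kostant_A r \<mu> = card {M. set_mset M \<subseteq> posroots_A r \<and> msum_vec M = \<mu>}"

end

theory Submission
  imports Defs
begin


definition root :: "nat \<Rightarrow> nat \<Rightarrow> nat \<Rightarrow> int" where
  "root i j = (\<lambda>k. eps i k - eps j k)"

lemma root_apply: "root i j k = (if k = i then 1 else 0) - (if k = j then 1 else 0)"
  by (simp add: root_def eps_def)

lemma posroots_alt: "posroots_A r = {root i j | i j. 1 \<le> i \<and> i < j \<and> j \<le> r + 1}"
  by (simp add: posroots_A_def root_def)

lemma root_inj: assumes "i < j" "i' < j'" "root i j = root i' j'" shows "i = i' \<and> j = j'"
proof -
  have a: "root i j i = root i' j' i" "root i j j = root i' j' j" using assms(3) by auto
  then show ?thesis using assms(1,2) unfolding root_apply by (auto split: if_splits)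
qed

lemma msum_empty[simp]: "msum_vec {#} = (\<lambda>_. 0)"
  by (simp add: msum_vec_def)

lemma msum_add[simp]: "msum_vec (add_mset v M) k = v k + msum_vec M k"
  by (simp add: msum_vec_def)

lemma msum_plus: "msum_vec (A + B) k = msum_vec A k + msum_vec B k"
  by (simp add: msum_vec_def)

lemma sum_mset_ge_elem:
  fixes f :: "'a \<Rightarrow> int"
  assumes "\<forall>w\<in>#M. f w \<ge> 0" "v \<in># M"
  shows "sum_mset (image_mset f M) \<ge> f v"
proof -
  obtain M' where M: "M = add_mset v M'" using multi_member_split[OF assms(2)] by blast
  have "\<forall>w\<in>#M'. f w \<ge> 0" using assms(1) M by auto
  then have "sum_mset (image_mset f M') \<ge> 0" by (induction M') auto
  then show ?thesis using M by simp
qed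

lemma tails_ge:
  assumes S: "set_mset M \<subseteq> posroots_A r" and Z: "\<forall>k<x. msum_vec M k = 0" and v: "v \<in># M"
  shows "\<exists>i j. v = root i j \<and> x \<le> i \<and> i < j \<and> j \<le> r+1"
proof (rule ccontr)
  assume nc: "\<not> ?thesis"
  have rt: "\<And>w. w \<in># M \<Longrightarrow> \<exists>i j. w = root i j \<and> 1 \<le> i \<and> i < j \<and> j \<le> r+1"
    using S posroots_alt by blast
  obtain i j where vij: "v = root i j" "1 \<le> i" "i < j" "j \<le> r+1" using rt[OF v] by blast
  have ix: "i < x" using nc vij by (metis not_less)
  define T where "T = {a. \<exists>b. a < b \<and> root a b \<in># M}"
  have fT: "finite T"
  proof -
    have "T \<subseteq> {..r+1}"
    proof
      fix a assume "a \<in> T"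
      then obtain b where "a < b" "root a b \<in># M" unfolding T_def by blast
      then show "a \<in> {..r+1}" using rt root_inj by (metis atMost_iff less_imp_le_nat order.strict_trans2)
    qed
    then show ?thesis using finite_subset by blast
  qed
  have iT: "i \<in> T" unfolding T_def using vij v by blast
  define i0 where "i0 = Min T"
  have i0T: "i0 \<in> T" unfolding i0_def using fT iT Min_in by blast
  have i0le: "i0 \<le> i" unfolding i0_def using fT iT by simp
  obtain b0 where b0: "i0 < b0" "root i0 b0 \<in># M" using i0T T_def by blast
  have nonneg: "\<forall>w\<in>#M. w i0 \<ge> 0"
  proof
    fix w assume w: "w \<in># M"
    obtain a b where ab: "w = root a b" "1 \<le> a" "a < b" "b \<le> r+1" using rt[OF w] by blast
    have "a \<in> T" unfolding T_def using ab w by blast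
    then have "i0 \<le> a" unfolding i0_def using fT by simp
    then show "w i0 \<ge> 0" using ab by (simp add: root_apply)
  qed
  have "msum_vec M i0 \<ge> root i0 b0 i0"
    unfolding msum_vec_def using sum_mset_ge_elem[OF nonneg b0(2)] by simp
  moreover have "root i0 b0 i0 = 1" using b0 by (simp add: root_apply)
  moreover have "msum_vec M i0 = 0" using Z i0le ix by simp
  ultimately show False by simp
qed

lemma msum_count:
  assumes "\<forall>v\<in>#M. \<exists>i j. v = root i j \<and> x \<le> i \<and> i < j"
  shows "msum_vec M x = int (size (filter_mset (\<lambda>v. v x = 1) M))"
  using assms
proof (induction M)
  case empty then show ?case by simp
next
  case (add v M)
  then obtain i j where "v = root i j" "x \<le> i" "i < j" by auto
  then have "v x = (if i = x then 1 else 0)" by (simp add: root_apply)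
  with add show ?case by auto
qed



definition mu :: "nat \<Rightarrow> nat \<Rightarrow> nat \<Rightarrow> nat \<Rightarrow> int" where
  "mu n x y = (\<lambda>k. eps x k + eps y k - 2 * eps n k)"

definition W :: "nat \<Rightarrow> nat \<Rightarrow> nat \<Rightarrow> (nat \<Rightarrow> int) multiset set" where
  "W r x y = {M. set_mset M \<subseteq> posroots_A r \<and> msum_vec M = mu (r+1) x y}"

lemma W_sym: "W r x y = W r y x"
  unfolding W_def mu_def by (simp add: add.commute)

lemma root_in: "1 \<le> i \<Longrightarrow> i < j \<Longrightarrow> j \<le> r+1 \<Longrightarrow> root i j \<in> posroots_A r"
  unfolding posroots_alt by blast

lemma W_tails:
  assumes "M \<in> W r x y" "x' \<le> x" "x' \<le> y" "x' \<le> r+1" "v \<in># M"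
  shows "\<exists>i j. v = root i j \<and> x' \<le> i \<and> i < j \<and> j \<le> r+1"
proof -
  have "\<forall>k<x'. msum_vec M k = 0" using assms(1-4) by (auto simp: W_def mu_def eps_def)
  then show ?thesis using tails_ge assms(1,5) unfolding W_def by blast
qed

lemma W_base: "W r (r+1) (r+1) = {{#}}"
proof
  show "W r (r+1) (r+1) \<subseteq> {{#}}"
  proof
    fix M assume M: "M \<in> W r (r+1) (r+1)"
    have "M = {#}"
    proof (rule ccontr)
      assume "M \<noteq> {#}"
      then obtain v where "v \<in># M" by blast
      moreover have "\<forall>k<r+2. msum_vec M k = 0" using M by (auto simp: W_def mu_def eps_def)
      ultimately show False using tails_ge[of M r "r+2" v] M by (auto simp: W_def)
    qed
    then show "M \<in> {{#}}" by simp
  qed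
  show "{{#}} \<subseteq> W r (r+1) (r+1)" by (auto simp: W_def mu_def)
qed

lemma filter_root_empty:
  assumes "\<forall>v\<in>#M. \<exists>i j. v = root i j \<and> Suc x \<le> i \<and> i < j"
  shows "filter_mset (\<lambda>v. v x = 1) M = {#}"
proof -
  have "\<forall>v\<in>#M. v x \<noteq> 1"
  proof
    fix v assume "v \<in># M"
    then obtain i j where "v = root i j" "Suc x \<le> i" "i < j" using assms by blast
    then show "v x \<noteq> 1" by (simp add: root_apply)
  qed
  then show ?thesis by (simp add: filter_mset_eq_conv)
qed

lemma W_step1:
  assumes x1: "1 \<le> x" and xy: "x < y" and yn: "y \<le> r+1"
  shows "bij_betw (\<lambda>(j,M). add_mset (root x j) M) (SIGMA j:{x<..r+1}. W r j y) (W r x y)"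
proof (rule bij_betwI')
  fix a b assume a: "a \<in> (SIGMA j:{x<..r+1}. W r j y)" and b: "b \<in> (SIGMA j:{x<..r+1}. W r j y)"
  obtain j M where a': "a = (j,M)" "x < j" "j \<le> r+1" "M \<in> W r j y" using a by auto
  obtain j' M' where b': "b = (j',M')" "x < j'" "j' \<le> r+1" "M' \<in> W r j' y" using b by auto
  have fM': "\<forall>v\<in>#M'. \<exists>i j. v = root i j \<and> Suc x \<le> i \<and> i < j"
    using W_tails[OF b'(4), of "Suc x"] b' xy yn by fastforce
  have fM: "\<forall>v\<in>#M. \<exists>i j. v = root i j \<and> Suc x \<le> i \<and> i < j"
    using W_tails[OF a'(4), of "Suc x"] a' xy yn by fastforce
  show "((\<lambda>(j,M). add_mset (root x j) M) a = (\<lambda>(j,M). add_mset (root x j) M) b) = (a = b)"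
  proof
    assume eq: "(\<lambda>(j,M). add_mset (root x j) M) a = (\<lambda>(j,M). add_mset (root x j) M) b"
    then have eq': "add_mset (root x j) M = add_mset (root x j') M'" using a' b' by simp
    have "filter_mset (\<lambda>v. v x = 1) (add_mset (root x j) M) = {#root x j#}"
      using filter_root_empty[OF fM] a' by (simp add: root_apply)
    moreover have "filter_mset (\<lambda>v. v x = 1) (add_mset (root x j') M') = {#root x j'#}"
      using filter_root_empty[OF fM'] b' by (simp add: root_apply)
    ultimately have "root x j = root x j'" using eq' by simp
    then have "j = j'" using root_inj a' b' by blast
    then show "a = b" using eq' a' b' by simp
  qed simp
next
  fix a assume a: "a \<in> (SIGMA j:{x<..r+1}. W r j y)"
  obtain j M where a': "a = (j,M)" "x < j" "j \<le> r+1" "M \<in> W r j y" using a by auto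
  have "root x j \<in> posroots_A r" using root_in x1 a' by blast
  moreover have "msum_vec (add_mset (root x j) M) = mu (r+1) x y"
    using a'(4) by (auto simp: W_def mu_def root_def)
  ultimately show "(\<lambda>(j,M). add_mset (root x j) M) a \<in> W r x y"
    using a' by (auto simp: W_def)
next
  fix M assume M: "M \<in> W r x y"
  have tl: "\<forall>v\<in>#M. \<exists>i j. v = root i j \<and> x \<le> i \<and> i < j \<and> j \<le> r+1"
    using W_tails[OF M, of x] xy yn by auto
  have "msum_vec M x = 1" using M xy yn by (auto simp: W_def mu_def eps_def)
  moreover have "msum_vec M x = int (size (filter_mset (\<lambda>v. v x = 1) M))"
    using msum_count tl by blast
  ultimately have "size (filter_mset (\<lambda>v. v x = 1) M) = 1" by simp
  then obtain v where fv: "filter_mset (\<lambda>v. v x = 1) M = {#v#}" using size_1_singleton_mset by blast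
  have "v \<in># filter_mset (\<lambda>v. v x = 1) M" using fv by simp
  then have vM: "v \<in># M" and vx: "v x = 1" by auto
  obtain i j where vij: "v = root i j" "x \<le> i" "i < j" "j \<le> r+1" using tl vM by blast
  have ix: "i = x" using vx vij by (auto simp: root_apply split: if_splits)
  define M' where "M' = filter_mset (\<lambda>v. v x \<noteq> 1) M"
  have Mdec: "M = add_mset v M'"
    using multiset_partition[of M "\<lambda>v. v x = 1"] fv unfolding M'_def by simp
  have "M' \<in> W r j y"
  proof -
    have "set_mset M' \<subseteq> posroots_A r" using M unfolding M'_def W_def by auto
    moreover have "msum_vec M' = mu (r+1) j y"
    proof
      fix k
      have "msum_vec M k = mu (r+1) x y k" using M by (simp add: W_def)
      then show "msum_vec M' k = mu (r+1) j y k"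
        using Mdec vij ix by (simp add: mu_def root_def)
    qed
    ultimately show ?thesis by (simp add: W_def)
  qed
  then show "\<exists>a\<in>(SIGMA j:{x<..r+1}. W r j y). M = (\<lambda>(j,M). add_mset (root x j) M) a"
    using Mdec vij ix by (intro bexI[of _ "(j,M')"]) auto
qed


lemma two_mset_eq: "{#a,b#} = {#c,d#} \<Longrightarrow> (a=c \<and> b=d) \<or> (a=d \<and> b=c)"
  by (metis add_eq_conv_ex single_eq_add_mset)

lemma W_step2:
  assumes x1: "1 \<le> x" and xn: "x < r+1"
  shows "bij_betw (\<lambda>(p,M). add_mset (root x (fst p)) (add_mset (root x (snd p)) M))
           (SIGMA p:(SIGMA j:{x<..r+1}. {j..r+1}). W r (fst p) (snd p)) (W r x x)"
proof (rule bij_betwI')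
  fix a b assume a: "a \<in> (SIGMA p:(SIGMA j:{x<..r+1}. {j..r+1}). W r (fst p) (snd p))"
    and b: "b \<in> (SIGMA p:(SIGMA j:{x<..r+1}. {j..r+1}). W r (fst p) (snd p))"
  obtain j k M where a': "a = ((j,k),M)" "x < j" "j \<le> k" "k \<le> r+1" "M \<in> W r j k" using a by auto
  obtain j' k' M' where b': "b = ((j',k'),M')" "x < j'" "j' \<le> k'" "k' \<le> r+1" "M' \<in> W r j' k'" using b by auto
  have fM': "\<forall>v\<in>#M'. \<exists>i j. v = root i j \<and> Suc x \<le> i \<and> i < j"
    using W_tails[OF b'(5), of "Suc x"] b' by fastforce
  have fM: "\<forall>v\<in>#M. \<exists>i j. v = root i j \<and> Suc x \<le> i \<and> i < j"
    using W_tails[OF a'(5), of "Suc x"] a' by fastforce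
  show "((\<lambda>(p,M). add_mset (root x (fst p)) (add_mset (root x (snd p)) M)) a =
         (\<lambda>(p,M). add_mset (root x (fst p)) (add_mset (root x (snd p)) M)) b) = (a = b)"
  proof
    assume eq: "(\<lambda>(p,M). add_mset (root x (fst p)) (add_mset (root x (snd p)) M)) a =
         (\<lambda>(p,M). add_mset (root x (fst p)) (add_mset (root x (snd p)) M)) b"
    then have eq': "add_mset (root x j) (add_mset (root x k) M) = add_mset (root x j') (add_mset (root x k') M')"
      using a' b' by simp
    have f1: "filter_mset (\<lambda>v. v x = 1) (add_mset (root x j) (add_mset (root x k) M)) = {#root x j, root x k#}"
      using filter_root_empty[OF fM] a' by (simp add: root_apply)
    have f2: "filter_mset (\<lambda>v. v x = 1) (add_mset (root x j') (add_mset (root x k') M')) = {#root x j', root x k'#}"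
      using filter_root_empty[OF fM'] b' by (simp add: root_apply)
    have h1: "filter_mset (\<lambda>v. v x \<noteq> 1) M = M"
      using filter_root_empty[OF fM] multiset_partition[of M "\<lambda>v. v x = 1"] by (metis add_0)
    have h2: "filter_mset (\<lambda>v. v x \<noteq> 1) M' = M'"
      using filter_root_empty[OF fM'] multiset_partition[of M' "\<lambda>v. v x = 1"] by (metis add_0)
    have g1: "filter_mset (\<lambda>v. v x \<noteq> 1) (add_mset (root x j) (add_mset (root x k) M)) = M"
      using h1 a' by (simp add: root_apply)
    have g2: "filter_mset (\<lambda>v. v x \<noteq> 1) (add_mset (root x j') (add_mset (root x k') M')) = M'"
      using h2 b' by (simp add: root_apply)
    have MM: "M = M'" using g1 g2 eq' by simp
    have two: "{#root x j, root x k#} = {#root x j', root x k'#}" using f1 f2 eq' by simp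
    have inj: "\<And>u w. x < u \<Longrightarrow> x < w \<Longrightarrow> root x u = root x w \<Longrightarrow> u = w"
      using root_inj by blast
    from two have "(root x j = root x j' \<and> root x k = root x k') \<or> (root x j = root x k' \<and> root x k = root x j')"
      by (rule two_mset_eq)
    then have "(j = j' \<and> k = k') \<or> (j = k' \<and> k = j')" using inj[of j j'] inj[of k k'] inj[of j k'] inj[of k j'] a' b' by auto
    then have "j = j' \<and> k = k'" using a' b' by auto
    then show "a = b" using MM a' b' by simp
  qed simp
next
  fix a assume a: "a \<in> (SIGMA p:(SIGMA j:{x<..r+1}. {j..r+1}). W r (fst p) (snd p))"
  obtain j k M where a': "a = ((j,k),M)" "x < j" "j \<le> k" "k \<le> r+1" "M \<in> W r j k" using a by auto
  have "root x j \<in> posroots_A r" "root x k \<in> posroots_A r" using root_in x1 a' by auto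
  moreover have "msum_vec (add_mset (root x j) (add_mset (root x k) M)) = mu (r+1) x x"
    using a'(5) by (auto simp: W_def mu_def root_def)
  ultimately show "(\<lambda>(p,M). add_mset (root x (fst p)) (add_mset (root x (snd p)) M)) a \<in> W r x x"
    using a' by (auto simp: W_def)
next
  fix M assume M: "M \<in> W r x x"
  have tl: "\<forall>v\<in>#M. \<exists>i j. v = root i j \<and> x \<le> i \<and> i < j \<and> j \<le> r+1"
    using W_tails[OF M, of x] xn by auto
  have "msum_vec M x = 2" using M xn by (auto simp: W_def mu_def eps_def)
  moreover have "msum_vec M x = int (size (filter_mset (\<lambda>v. v x = 1) M))"
    using msum_count tl by blast
  ultimately have sz: "size (filter_mset (\<lambda>v. v x = 1) M) = 2" by simp
  then have "size (filter_mset (\<lambda>v. v x = 1) M) = Suc 1" by simp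
  from size_eq_Suc_imp_elem[OF this] obtain v where vF: "v \<in># filter_mset (\<lambda>v. v x = 1) M" by (elim exE)
  from multi_member_split[OF vF] obtain F where F: "filter_mset (\<lambda>v. v x = 1) M = add_mset v F"
    by (elim exE)
  with sz have "size F = 1" by simp
  then obtain w where "F = {#w#}" using size_1_singleton_mset by blast
  with F have fv: "filter_mset (\<lambda>v. v x = 1) M = {#v, w#}" by simp
  have "v \<in># filter_mset (\<lambda>v. v x = 1) M" "w \<in># filter_mset (\<lambda>v. v x = 1) M" using fv by simp_all
  then have vM: "v \<in># M" "v x = 1" "w \<in># M" "w x = 1" by auto
  obtain i j where vij: "v = root i j" "x \<le> i" "i < j" "j \<le> r+1" using tl vM by blast
  have ix: "i = x" using vM vij by (auto simp: root_apply split: if_splits)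
  obtain i' k where wij: "w = root i' k" "x \<le> i'" "i' < k" "k \<le> r+1" using tl vM by blast
  have ix': "i' = x" using vM wij by (auto simp: root_apply split: if_splits)
  define M' where "M' = filter_mset (\<lambda>v. v x \<noteq> 1) M"
  have Mdec: "M = add_mset v (add_mset w M')"
    using multiset_partition[of M "\<lambda>v. v x = 1"] fv unfolding M'_def by simp
  have MW: "M' \<in> W r j k"
  proof -
    have "set_mset M' \<subseteq> posroots_A r" using M unfolding M'_def W_def by auto
    moreover have "msum_vec M' = mu (r+1) j k"
    proof
      fix k'
      have "msum_vec M k' = mu (r+1) x x k'" using M by (simp add: W_def)
      then show "msum_vec M' k' = mu (r+1) j k k'"
        using Mdec vij ix wij ix' by (simp add: mu_def root_def)
    qed
    ultimately show ?thesis by (simp add: W_def)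
  qed
  show "\<exists>a\<in>(SIGMA p:(SIGMA j:{x<..r+1}. {j..r+1}). W r (fst p) (snd p)).
          M = (\<lambda>(p,M). add_mset (root x (fst p)) (add_mset (root x (snd p)) M)) a"
  proof (cases "j \<le> k")
    case True
    then show ?thesis using Mdec vij ix wij ix' MW by (intro bexI[of _ "((j,k),M')"]) auto
  next
    case False
    have "M' \<in> W r k j" using MW W_sym by blast
    then show ?thesis using False Mdec vij ix wij ix'
      by (intro bexI[of _ "((k,j),M')"]) auto
  qed
qed



fun PS :: "nat \<Rightarrow> nat \<times> nat" where
  "PS 0 = (1, 0)"
| "PS (Suc d) = (if d = 0 then (fst (PS d) + snd (PS d), 3 * snd (PS d) + fst (PS d))
                 else (2 * fst (PS d) + snd (PS d), 3 * snd (PS d) + fst (PS d)))"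

definition "PP d = fst (PS d)"
definition "SS d = snd (PS d)"
definition "RR d = PP d + SS d"

lemma PP0: "PP 0 = 1" and SS0: "SS 0 = 0" by (simp_all add: PP_def SS_def)
lemma PP_Suc: "PP (Suc d) = (if d = 0 then RR d else PP d + RR d)"
  by (simp add: PP_def SS_def RR_def)
lemma SS_Suc: "SS (Suc d) = 2 * SS d + RR d"
  by (simp add: PP_def SS_def RR_def)

lemma SS_sum: "SS b = (\<Sum>c<b. 2^(b-c-1) * RR c)"
proof (induction b)
  case 0 then show ?case by (simp add: SS0)
next
  case (Suc b)
  have "(\<Sum>c<Suc b. 2^(Suc b-c-1) * RR c) = (\<Sum>c<b. 2^(Suc b-c-1) * RR c) + RR b" by simp
  also have "(\<Sum>c<b. 2^(Suc b-c-1) * RR c) = (\<Sum>c<b. 2 * (2^(b-c-1) * RR c))"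
  proof (rule sum.cong)
    fix c assume "c \<in> {..<b}"
    then have "Suc b - c - 1 = Suc (b - c - 1)" by auto
    then show "2^(Suc b-c-1) * RR c = 2 * (2^(b-c-1) * RR c)" by simp
  qed simp
  also have "\<dots> = 2 * SS b" using Suc by (simp add: sum_distrib_left)
  finally show ?case by (simp add: SS_Suc)
qed

lemma PP_sum: "0 < b \<Longrightarrow> PP b = (\<Sum>c<b. RR c)"
proof (induction b)
  case 0 then show ?case by simp
next
  case (Suc b)
  then show ?case by (cases "b = 0") (auto simp: PP_Suc)
qed

lemma sum_rev: fixes n y :: nat and g :: "nat \<Rightarrow> nat" shows "y \<le> n \<Longrightarrow> (\<Sum>j\<in>{y<..n}. g (n - j)) = (\<Sum>c<n-y. (g c :: nat))"
proof (induction n arbitrary: g)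
  case 0 then show ?case by simp
next
  case (Suc n)
  show ?case
  proof (cases "y = Suc n")
    case True then show ?thesis by simp
  next
    case False
    then have yn: "y \<le> n" using Suc by simp
    have "{y<..Suc n} = insert (Suc n) {y<..n}" using yn by auto
    then have "(\<Sum>j\<in>{y<..Suc n}. g (Suc n - j)) = g 0 + (\<Sum>j\<in>{y<..n}. g (Suc n - j))" by simp
    also have "(\<Sum>j\<in>{y<..n}. g (Suc n - j)) = (\<Sum>j\<in>{y<..n}. (g \<circ> Suc) (n - j))"
      by (rule sum.cong) (auto simp: Suc_diff_le)
    also have "\<dots> = (\<Sum>c<n-y. g (Suc c))" using Suc.IH[OF yn, of "g \<circ> Suc"] by simp
    finally show ?thesis using yn by (simp add: Suc_diff_le lessThan_Suc_eq_insert_0 sum.reindex)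
  qed
qed

lemma geo: "x < y \<Longrightarrow> (\<Sum>j\<in>{x<..<y}. (2::nat)^(y-j-1)) + 1 = 2^(y-x-1)"
proof (induction y)
  case 0 then show ?case by simp
next
  case (Suc y)
  show ?case
  proof (cases "x = y")
    case True then show ?thesis by simp
  next
    case False
    then have xy: "x < y" using Suc by simp
    have "{x<..<Suc y} = insert y {x<..<y}" using xy by auto
    then have "(\<Sum>j\<in>{x<..<Suc y}. (2::nat)^(Suc y-j-1)) = 1 + (\<Sum>j\<in>{x<..<y}. 2^(Suc y-j-1))" by simp
    also have "(\<Sum>j\<in>{x<..<y}. (2::nat)^(Suc y-j-1)) = (\<Sum>j\<in>{x<..<y}. 2 * 2^(y-j-1))"
      by (rule sum.cong) (auto simp: Suc_diff_Suc simp flip: power_Suc)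
    also have "\<dots> = 2 * (\<Sum>j\<in>{x<..<y}. 2^(y-j-1))" by (simp add: sum_distrib_left)
    finally have e1: "(\<Sum>j\<in>{x<..<Suc y}. (2::nat)^(Suc y-j-1)) = 1 + 2 * (\<Sum>j\<in>{x<..<y}. 2^(y-j-1))" .
    have e2: "Suc y - x - 1 = Suc (y - x - 1)" using xy by auto
    show ?thesis unfolding e1 e2 power_Suc using Suc.IH[OF xy] by linarith
  qed
qed



lemma split3: fixes f :: "nat \<Rightarrow> nat" assumes "x < y"
  shows "(\<Sum>j\<in>{x<..<y} \<union> ({y} \<union> {y<..n}). f j) = (\<Sum>j\<in>{x<..<y}. f j) + (f y + (\<Sum>j\<in>{y<..n}. f j))"
proof -
  have "(\<Sum>j\<in>{x<..<y} \<union> ({y} \<union> {y<..n}). f j) = (\<Sum>j\<in>{x<..<y}. f j) + (\<Sum>j\<in>{y} \<union> {y<..n}. f j)"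
    by (rule sum.union_disjoint) auto
  also have "(\<Sum>j\<in>{y} \<union> {y<..n}. f j) = f y + (\<Sum>j\<in>{y<..n}. f j)"
    by (subst sum.union_disjoint) auto
  finally show ?thesis .
qed

definition G :: "nat \<Rightarrow> nat \<Rightarrow> nat \<Rightarrow> nat" where
  "G n a b = (if a = b then PP (n - a) else 2^(b-a-1) * RR (n - b))"

lemma main_count:
  assumes "1 \<le> x" "x \<le> r+1"
  shows "\<forall>y. x \<le> y \<and> y \<le> r+1 \<longrightarrow> finite (W r x y) \<and> card (W r x y) = G (r+1) x y"
  using assms
proof (induction "r+1-x" arbitrary: x rule: less_induct)
  case less
  define n where "n = r+1"
  have IH: "finite (W r a b) \<and> card (W r a b) = G n (min a b) (max a b)"
    if "x < a" "x < b" "a \<le> n" "b \<le> n" for a b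
  proof (cases "a \<le> b")
    case True
    have "r+1-a < r+1-x" using that less.prems n_def by linarith
    then show ?thesis using less.hyps[of a] that True less.prems n_def by auto
  next
    case False
    have "r+1-b < r+1-x" using that less.prems n_def by linarith
    then have "finite (W r b a) \<and> card (W r b a) = G n b a" using less.hyps[of b] that False less.prems n_def by auto
    then show ?thesis using W_sym[of r a b] False by auto
  qed
  show ?case
  proof (intro allI impI)
    fix y assume y: "x \<le> y \<and> y \<le> r+1"
    show "finite (W r x y) \<and> card (W r x y) = G (r+1) x y"
    proof (cases "x = r+1")
      case True
      then have "y = r+1" using y by simp
      then show ?thesis using True W_base[of r] by (simp add: G_def PP0)
    next
      case False
      then have xn: "x < n" using less.prems n_def by simp
      show ?thesis
      proof (cases "x = y")
        case False
        then have xy: "x < y" using y by simp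
        have bij: "bij_betw (\<lambda>(j,M). add_mset (root x j) M) (SIGMA j:{x<..n}. W r j y) (W r x y)"
          using W_step1[of x y r] less.prems xy y n_def by simp
        have fin: "\<forall>j\<in>{x<..n}. finite (W r j y)" using IH xy y n_def by auto
        have finS: "finite (SIGMA j:{x<..n}. W r j y)" using fin by auto
        have "card (W r x y) = card (SIGMA j:{x<..n}. W r j y)" by (rule bij_betw_same_card[OF bij, symmetric])
        also have "\<dots> = (\<Sum>j\<in>{x<..n}. card (W r j y))" using fin card_SigmaI by simp
        also have "\<dots> = (\<Sum>j\<in>{x<..n}. G n (min j y) (max j y))"
          by (rule sum.cong) (use IH xy y n_def in auto)
        also have "\<dots> = 2^(y-x-1) * RR (n - y)"
        proof -
          have split: "{x<..n} = {x<..<y} \<union> ({y} \<union> {y<..n})" using xy y n_def by auto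
          have s1: "(\<Sum>j\<in>{x<..<y}. G n (min j y) (max j y)) = (\<Sum>j\<in>{x<..<y}. 2^(y-j-1)) * RR (n-y)"
            by (simp add: sum_distrib_right G_def)
          have s3: "(\<Sum>j\<in>{y<..n}. G n (min j y) (max j y)) = SS (n - y)"
          proof -
            have "(\<Sum>j\<in>{y<..n}. G n (min j y) (max j y)) = (\<Sum>j\<in>{y<..n}. (\<lambda>c. 2^((n-y)-c-1) * RR c) (n - j))"
              by (rule sum.cong) (auto simp: G_def)
            also have "\<dots> = (\<Sum>c<n-y. 2^((n-y)-c-1) * RR c)" using sum_rev[of y n "\<lambda>c. 2^((n-y)-c-1) * RR c"] y n_def by simp
            finally show ?thesis by (simp add: SS_sum)
          qed
          have "(\<Sum>j\<in>{x<..n}. G n (min j y) (max j y)) = (\<Sum>j\<in>{x<..<y}. 2^(y-j-1)) * RR (n-y) + (PP (n-y) + SS (n-y))"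
            unfolding split split3[OF xy] s1 s3 by (simp add: G_def)
          also have "\<dots> = ((\<Sum>j\<in>{x<..<y}. 2^(y-j-1)) + 1) * RR (n-y)" by (simp add: RR_def algebra_simps)
          also have "\<dots> = 2^(y-x-1) * RR (n - y)" using geo[OF xy] by simp
          finally show ?thesis .
        qed
        finally show ?thesis using bij_betw_finite[OF bij] finS xy n_def by (simp add: G_def)
      next
        case True
        then have yx: "y = x" by simp
        let ?A = "SIGMA j:{x<..n}. {j..n}"
        have bij: "bij_betw (\<lambda>(p,M). add_mset (root x (fst p)) (add_mset (root x (snd p)) M))
           (SIGMA p:?A. W r (fst p) (snd p)) (W r x x)"
          using W_step2[of x r] less.prems xn n_def by simp
        have finA: "finite ?A" by auto
        have fin: "\<forall>p\<in>?A. finite (W r (fst p) (snd p))" using IH by auto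
        have finS: "finite (SIGMA p:?A. W r (fst p) (snd p))" using fin finA by (intro finite_SigmaI) blast+
        have "card (W r x x) = card (SIGMA p:?A. W r (fst p) (snd p))" by (rule bij_betw_same_card[OF bij, symmetric])
        also have "\<dots> = (\<Sum>p\<in>?A. card (W r (fst p) (snd p)))" using fin finA card_SigmaI by simp
        also have "\<dots> = (\<Sum>j\<in>{x<..n}. \<Sum>k\<in>{j..n}. card (W r j k))"
          by (subst sum.Sigma) (auto simp: case_prod_beta)
        also have "\<dots> = (\<Sum>j\<in>{x<..n}. RR (n - j))"
        proof (rule sum.cong)
          fix j assume j: "j \<in> {x<..n}"
          have "(\<Sum>k\<in>{j..n}. card (W r j k)) = (\<Sum>k\<in>{j..n}. G n j k)"
            by (rule sum.cong) (use IH j in auto)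
          also have "\<dots> = G n j j + (\<Sum>k\<in>{j<..n}. G n j k)"
          proof -
            have "{j..n} = insert j {j<..n}" using j by auto
            then show ?thesis by simp
          qed
          also have "(\<Sum>k\<in>{j<..n}. G n j k) = SS (n - j)"
          proof -
            have "(\<Sum>k\<in>{j<..n}. G n j k) = (\<Sum>k\<in>{j<..n}. (\<lambda>c. 2^((n-j)-c-1) * RR c) (n - k))"
              by (rule sum.cong) (auto simp: G_def)
            also have "\<dots> = (\<Sum>c<n-j. 2^((n-j)-c-1) * RR c)" using sum_rev[of j n "\<lambda>c. 2^((n-j)-c-1) * RR c"] j by simp
            finally show ?thesis by (simp add: SS_sum)
          qed
          finally show "(\<Sum>k\<in>{j..n}. card (W r j k)) = RR (n - j)" by (simp add: G_def RR_def)
        qed simp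
        also have "\<dots> = (\<Sum>c<n-x. RR c)" using sum_rev[of x n RR] xn by simp
        also have "\<dots> = PP (n - x)" using PP_sum[of "n-x"] xn by simp
        finally show ?thesis using bij_betw_finite[OF bij] finS yx n_def by (simp add: G_def)
      qed
    qed
  qed
qed



lemma target_eq: "(\<lambda>k. \<Sum>i=1..r. 2 * simple_root i k) = mu (r+1) 1 1"
proof
  fix k show "(\<Sum>i=1..r. 2 * simple_root i k) = mu (r+1) 1 1 k"
    by (induction r) (auto simp: mu_def simple_root_def eps_def)
qed

lemma PP_rec: "0 < d \<Longrightarrow> PP (d+2) + 5 * PP d = 5 * PP (d+1)"
proof -
  assume d: "0 < d"
  have a: "PP (Suc d) = 2 * PP d + SS d" using d by (simp add: PP_Suc RR_def)
  have b: "PP (Suc (Suc d)) = 2 * PP (Suc d) + SS (Suc d)" by (simp add: PP_Suc RR_def)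
  have c: "SS (Suc d) = 3 * SS d + PP d" by (simp add: SS_Suc RR_def)
  show ?thesis using a b c by simp
qed

definition cf :: "nat \<Rightarrow> real" where
  "cf d = ((5 - sqrt 5) ^ d + (5 + sqrt 5) ^ d) / (5 * 2 ^ d)"

lemma cf_alt: "cf d = (((5 - sqrt 5)/2) ^ d + ((5 + sqrt 5)/2) ^ d) / 5"
  unfolding cf_def power_divide by (simp add: field_simps)

lemma cf_rec: "cf (d+2) = 5 * cf (d+1) - 5 * cf d"
proof -
  have s: "sqrt 5 ^ 2 = (5::real)" by simp
  have qa: "((5 - sqrt 5)/2) ^ 2 = 5 * ((5 - sqrt 5)/2) - (5::real)"
    by (simp add: power2_eq_square field_simps)
  have qb: "((5 + sqrt 5)/2) ^ 2 = 5 * ((5 + sqrt 5)/2) - (5::real)"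
    by (simp add: power2_eq_square field_simps)
  show ?thesis unfolding cf_alt power_add qa qb by (simp add: field_simps)
qed

lemma PP_cf: "0 < d \<Longrightarrow> real (PP d) = cf d \<and> real (PP (d+1)) = cf (d+1)"
proof (induction d rule: nat_induct_non_zero)
  case 1
  have "PP 1 = 1" "PP 2 = 3" by (simp_all add: PP_def numeral_2_eq_2)
  moreover have "cf 1 = 1" "cf 2 = 3"
    by (simp_all add: cf_def power2_eq_square field_simps)
  ultimately show ?case by (simp add: numeral_2_eq_2)
next
  case (Suc d)
  have "real (PP (d+2)) = 5 * real (PP (d+1)) - 5 * real (PP d)"
    using PP_rec[OF Suc.hyps(1)] by (metis (mono_tags) add_diff_cancel_right' of_nat_add of_nat_mult of_nat_numeral of_nat_diff le_add1)
  then show ?case using Suc cf_rec[of d] by simp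
qed

theorem mainTheorem9:
  fixes r :: nat
  assumes "r \<ge> 2"
  shows "real (kostant_A r (\<lambda>k. \<Sum>i=1..r. 2 * simple_root i k))
       = ((5 - sqrt 5) ^ r + (5 + sqrt 5) ^ r) / (5 * 2 ^ r)"
proof -
  have "kostant_A r (\<lambda>k. \<Sum>i=1..r. 2 * simple_root i k) = card (W r 1 1)"
    unfolding target_eq kostant_A_def W_def by simp
  also have "\<dots> = G (r+1) 1 1" using main_count[of 1 r] by simp
  also have "\<dots> = PP r" by (simp add: G_def)
  finally show ?thesis using PP_cf[of r] assms by (simp add: cf_def)
qed

end
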